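(* (Truth lemma) For every state $(\Delta,\pi,i)$ of the canonical model $\mathcal{M}^{Can}$ and every $\alpha\in\mathcal{L}_T$: $\mathcal{M}^{Can},(\Delta,\pi,i)\models\alpha$ if and only if $\alpha\in\Delta$.
   Context: $\mathcal{L}_T$: $\alpha::=\varphi\mid\varphi\rightsquigarrow\varphi\mid B(\alpha)\mid\alpha*\alpha\mid\neg\alpha$, with $\varphi$ ranging over classical propositional formulas (set $\mathcal{L}_{CL}$, built from variables, $\bot$ and classical connectives) and $*\in\{\land,\lor,\to,\leftrightarrow\}$. SBTrust is the Hilbert system ($\varphi,\psi,\chi,\varphi_i,\psi_i$ propositional; $\alpha,\beta\in\mathcal{L}_T$; rule outputs in $\mathcal{L}_T$): classical tautologies and Modus Ponens; $\varphi\rightsquigarrow\varphi$; $(\varphi\rightsquigarrow\bot)\to\neg\varphi$; $((\psi\land\chi)\rightsquigarrow\varphi)\to(\psi\rightsquigarrow(\chi\to\varphi))$; $(\neg(\varphi\leftrightarrow\psi)\rightsquigarrow\bot)\to((\varphi\rightsquigarrow\chi)\leftrightarrow(\psi\rightsquigarrow\chi))$; rule RCK: from $(\varphi_1\land\dots\land\varphi_n)\to\varphi_{n+1}$ infer $\bigwedge_{j\le n}(\psi\rightsquigarrow\varphi_j)\to(\psi\rightsquigarrow\varphi_{n+1})$; rule $\mathbf{S5_F}$: from $(\ell_1\land\dots\land\ell_n)\to\chi$ infer $(\ell_1\land\dots\land\ell_n)\to(\neg\chi\rightsquigarrow\bot)$, each $\ell_j$ being $\varphi_j\rightsquigarrow\psi_j$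 or its negation, $\chi$ propositional; $B(\alpha\to\beta)\to(B\alpha\to B\beta)$; $B\alpha\to\neg B\neg\alpha$; $B\alpha\to BB\alpha$; necessitation for $B$. MCS: $\Gamma\subseteq\mathcal{L}_T$ with $\Gamma\nvdash\bot$ and, for each $\alpha$, $\alpha\in\Gamma$ or $\neg\alpha\in\Gamma$. $\Gamma\leftrightsquigarrow\Delta$ iff the MCSs contain the same formulas of the form $\chi\rightsquigarrow\psi$; $[\Gamma]_\leftrightsquigarrow$ its class. $\rightsquigarrow_\varphi(\Gamma)=\{\psi:\varphi\rightsquigarrow\psi\in\Gamma\}$; $\Delta$ is $\varphi$-likely for $\Gamma$ if $\rightsquigarrow_\varphi(\Gamma)\subseteq\Delta$. $S_\Gamma=[\Gamma]_\leftrightsquigarrow\times\mathcal{L}_{CL}\times\{0,1,2\}$; $(\Delta,\varphi,i)\succeq_\Gamma(\Omega,\psi,j)$ iff ($\Delta$ is $\varphi$-likely for $\Gamma$ and $\varphi\in\Omega$) or ($i=1,j=0$) or ($i=2,j=1$) or ($i=0,j=2$). Fix a set $I$ containing exactly one representative of each $\leftrightsquigarrow$-class. The canonical model is $\mathcal{M}^{Can}=\langle S,(S_\Gamma)_{\Gamma\in I},(\succeq_\Gamma)_{\Gamma\in I},R,V\rangle$ with $S=\bigcup_{\Gamma\in I}S_\Gamma$, $V(p)=\{(\Delta,\varphi,i)\in S:p\in\Delta\}$, and $(\Delta,\varphi,i)R(\Omega,\psi,j)$ iff for all $\alpha\in\mathcal{L}_T$, $B(\alpha)\in\Delta\Rightarrow\alpha\in\Omega$.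 Truth in such a structure: $s\models p$ iff $s\in V(p)$; Boolean clauses as usual; $s\models\varphi\rightsquigarrow\psi$ iff $\mathit{most}(\|\varphi\|_\Gamma)\subseteq\|\psi\|_\Gamma$ where $s\in S_\Gamma$, $\|\varphi\|_\Gamma=\{v\in S_\Gamma:v\models\varphi\}$ and $\mathit{most}(X)=\{x\in X:\forall y\in X\,(y\succeq_\Gamma x\Rightarrow x\succeq_\Gamma y)\}$; $s\models B(\alpha)$ iff $v\models\alpha$ for all $v$ with $sRv$. *)

theory Defs
  imports Main
begin

datatype 'v form =
    FVar 'v
  | FBot
  | FNeg "'v form"
  | FAnd "'v form" "'v form"
  | FOr  "'v form" "'v form"
  | FImp "'v form" "'v form"
  | FIff "'v form" "'v form"
  | FCond "'v form" "'v form"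
  | FBel "'v form"

fun classical :: "'v form \<Rightarrow> bool" where
  "classical (FVar p) = True"
| "classical FBot = True"
| "classical (FNeg a) = classical a"
| "classical (FAnd a b) = (classical a \<and> classical b)"
| "classical (FOr a b) = (classical a \<and> classical b)"
| "classical (FImp a b) = (classical a \<and> classical b)"
| "classical (FIff a b) = (classical a \<and> classical b)"
| "classical (FCond a b) = False"
| "classical (FBel a) = False"

fun inLT :: "'v form \<Rightarrow> bool" where
  "inLT (FVar p) = True"
| "inLT FBot = True"
| "inLT (FNeg a) = inLT a"
| "inLT (FAnd a b) = (inLT a \<and> inLT b)"
| "inLT (FOr a b) = (inLT a \<and> inLT b)"
| "inLT (FImp a b) = (inLT a \<and> inLT b)"
| "inLT (FIff a b) = (inLT a \<and> inLT b)"
| "inLT (FCond a b) = (classical a \<and> classical b)"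
| "inLT (FBel a) = inLT a"

text \<open>Boolean evaluation where variables, conditionals and belief formulas are atoms.\<close>
fun beval :: "('v form \<Rightarrow> bool) \<Rightarrow> 'v form \<Rightarrow> bool" where
  "beval f (FVar p) = f (FVar p)"
| "beval f FBot = False"
| "beval f (FNeg a) = (\<not> beval f a)"
| "beval f (FAnd a b) = (beval f a \<and> beval f b)"
| "beval f (FOr a b) = (beval f a \<or> beval f b)"
| "beval f (FImp a b) = (beval f a \<longrightarrow> beval f b)"
| "beval f (FIff a b) = (beval f a \<longleftrightarrow> beval f b)"
| "beval f (FCond a b) = f (FCond a b)"
| "beval f (FBel a) = f (FBel a)"

definition taut :: "'v form \<Rightarrow> bool" where
  "taut \<alpha> \<longleftrightarrow> inLT \<alpha> \<and> (\<forall>f. beval f \<alpha>)"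

text \<open>Finite conjunction \<open>x1 \<and> ... \<and> xn\<close> (used with nonempty lists)\<close>
fun conjs :: "'v form list \<Rightarrow> 'v form" where
  "conjs [] = FNeg FBot"
| "conjs [x] = x"
| "conjs (x # y # ys) = FAnd x (conjs (y # ys))"

definition is_literal :: "'v form \<Rightarrow> bool" where
  "is_literal l \<longleftrightarrow> (\<exists>a b. classical a \<and> classical b \<and> (l = FCond a b \<or> l = FNeg (FCond a b)))"

inductive sbthm :: "'v form \<Rightarrow> bool" where
  Taut: "taut \<alpha> \<Longrightarrow> sbthm \<alpha>"
| MP: "sbthm \<alpha> \<Longrightarrow> sbthm (FImp \<alpha> \<beta>) \<Longrightarrow> sbthm \<beta>"
| Id: "classical \<phi> \<Longrightarrow> sbthm (FCond \<phi> \<phi>)"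
| Bot: "classical \<phi> \<Longrightarrow> sbthm (FImp (FCond \<phi> FBot) (FNeg \<phi>))"
| Sh: "classical \<phi> \<Longrightarrow> classical \<psi> \<Longrightarrow> classical \<chi> \<Longrightarrow>
      sbthm (FImp (FCond (FAnd \<psi> \<chi>) \<phi>) (FCond \<psi> (FImp \<chi> \<phi>)))"
| Ext: "classical \<phi> \<Longrightarrow> classical \<psi> \<Longrightarrow> classical \<chi> \<Longrightarrow>
      sbthm (FImp (FCond (FNeg (FIff \<phi> \<psi>)) FBot) (FIff (FCond \<phi> \<chi>) (FCond \<psi> \<chi>)))"
| RCK: "\<phi>s \<noteq> [] \<Longrightarrow> (\<forall>x\<in>set \<phi>s. classical x) \<Longrightarrow> classical \<phi> \<Longrightarrow> classical \<psi> \<Longrightarrow>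
      sbthm (FImp (conjs \<phi>s) \<phi>) \<Longrightarrow>
      sbthm (FImp (conjs (map (FCond \<psi>) \<phi>s)) (FCond \<psi> \<phi>))"
| S5F: "ls \<noteq> [] \<Longrightarrow> (\<forall>l\<in>set ls. is_literal l) \<Longrightarrow> classical \<chi> \<Longrightarrow>
      sbthm (FImp (conjs ls) \<chi>) \<Longrightarrow>
      sbthm (FImp (conjs ls) (FCond (FNeg \<chi>) FBot))"
| K: "inLT \<alpha> \<Longrightarrow> inLT \<beta> \<Longrightarrow> sbthm (FImp (FBel (FImp \<alpha> \<beta>)) (FImp (FBel \<alpha>) (FBel \<beta>)))"
| D: "inLT \<alpha> \<Longrightarrow> sbthm (FImp (FBel \<alpha>) (FNeg (FBel (FNeg \<alpha>))))"
| Four: "inLT \<alpha> \<Longrightarrow> sbthm (FImp (FBel \<alpha>) (FBel (FBel \<alpha>)))"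
| Nec: "sbthm \<alpha> \<Longrightarrow> sbthm (FBel \<alpha>)"

text \<open>Derivability from a set of premises: \<open>\<Gamma> \<turnstile> \<alpha>\<close> iff \<open>\<turnstile> \<gamma>1 \<rightarrow> (\<dots> \<rightarrow> (\<gamma>n \<rightarrow> \<alpha>))\<close>
  for some \<open>\<gamma>1,\<dots>,\<gamma>n \<in> \<Gamma>\<close> (MP applied to premises; necessitation only on theorems).\<close>
definition derives :: "'v form set \<Rightarrow> 'v form \<Rightarrow> bool" where
  "derives \<Gamma> \<alpha> \<longleftrightarrow> (\<exists>xs. set xs \<subseteq> \<Gamma> \<and> sbthm (foldr FImp xs \<alpha>))"

definition MCS :: "'v form set \<Rightarrow> bool" where
  "MCS \<Gamma> \<longleftrightarrow> \<Gamma> \<subseteq> {\<alpha>. inLT \<alpha>} \<and> \<not> derives \<Gamma> FBot \<and>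
     (\<forall>\<alpha>. inLT \<alpha> \<longrightarrow> \<alpha> \<in> \<Gamma> \<or> FNeg \<alpha> \<in> \<Gamma>)"

definition most :: "('s \<Rightarrow> 's \<Rightarrow> bool) \<Rightarrow> 's set \<Rightarrow> 's set" where
  "most P X = {x \<in> X. \<forall>y\<in>X. P y x \<longrightarrow> P x y}"

text \<open>\<open>Sc \<Gamma>\<close> is the cell \<open>S_\<Gamma>\<close>, \<open>P \<Gamma> x y\<close> means \<open>x \<succeq>_\<Gamma> y\<close>; the cell of \<open>s\<close> is the unique
  \<open>\<Gamma>\<in>I\<close> with \<open>s\<in>S_\<Gamma>\<close>.\<close>
fun sat :: "'i set \<Rightarrow> ('i \<Rightarrow> 's set) \<Rightarrow> ('i \<Rightarrow> 's \<Rightarrow> 's \<Rightarrow> bool) \<Rightarrow> ('s \<Rightarrow> 's \<Rightarrow> bool)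
             \<Rightarrow> ('v \<Rightarrow> 's set) \<Rightarrow> 's \<Rightarrow> 'v form \<Rightarrow> bool" where
  "sat I Sc P R V s (FVar p) = (s \<in> V p)"
| "sat I Sc P R V s FBot = False"
| "sat I Sc P R V s (FNeg a) = (\<not> sat I Sc P R V s a)"
| "sat I Sc P R V s (FAnd a b) = (sat I Sc P R V s a \<and> sat I Sc P R V s b)"
| "sat I Sc P R V s (FOr a b) = (sat I Sc P R V s a \<or> sat I Sc P R V s b)"
| "sat I Sc P R V s (FImp a b) = (sat I Sc P R V s a \<longrightarrow> sat I Sc P R V s b)"
| "sat I Sc P R V s (FIff a b) = (sat I Sc P R V s a \<longleftrightarrow> sat I Sc P R V s b)"
| "sat I Sc P R V s (FCond a b) =
     (let \<Gamma> = (THE \<Gamma>. \<Gamma> \<in> I \<and> s \<in> Sc \<Gamma>) in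
        most (P \<Gamma>) {v \<in> Sc \<Gamma>. sat I Sc P R V v a} \<subseteq> {v \<in> Sc \<Gamma>. sat I Sc P R V v b})"
| "sat I Sc P R V s (FBel a) = (\<forall>v. R s v \<longrightarrow> sat I Sc P R V v a)"

type_synonym 'v cstate = "'v form set \<times> 'v form \<times> nat"

definition same_conds :: "'v form set \<Rightarrow> 'v form set \<Rightarrow> bool" where
  "same_conds \<Gamma> \<Delta> \<longleftrightarrow> (\<forall>a b. FCond a b \<in> \<Gamma> \<longleftrightarrow> FCond a b \<in> \<Delta>)"

definition representatives :: "'v form set set \<Rightarrow> bool" where
  "representatives I \<longleftrightarrow> (\<forall>\<Gamma>\<in>I. MCS \<Gamma>) \<and>
     (\<forall>\<Delta>. MCS \<Delta> \<longrightarrow> (\<exists>!\<Gamma>. \<Gamma> \<in> I \<and> same_conds \<Delta> \<Gamma>))"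

definition likely_set :: "'v form \<Rightarrow> 'v form set \<Rightarrow> 'v form set" where
  "likely_set \<phi> \<Gamma> = {\<psi>. FCond \<phi> \<psi> \<in> \<Gamma>}"

definition can_cell :: "'v form set \<Rightarrow> 'v cstate set" where
  "can_cell \<Gamma> = {(\<Delta>, \<phi>, i). MCS \<Delta> \<and> same_conds \<Delta> \<Gamma> \<and> classical \<phi> \<and> i \<in> {0,1,2}}"

definition can_pref :: "'v form set \<Rightarrow> 'v cstate \<Rightarrow> 'v cstate \<Rightarrow> bool" where
  "can_pref \<Gamma> x y = (case x of (\<Delta>, \<phi>, i) \<Rightarrow> case y of (\<Omega>, \<psi>, j) \<Rightarrow>
     (likely_set \<phi> \<Gamma> \<subseteq> \<Delta> \<and> \<phi> \<in> \<Omega>) \<or> (i = 1 \<and> j = 0) \<or> (i = 2 \<and> j = 1) \<or> (i = 0 \<and> j = 2))"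

definition can_S :: "'v form set set \<Rightarrow> 'v cstate set" where
  "can_S I = (\<Union>\<Gamma>\<in>I. can_cell \<Gamma>)"

definition can_V :: "'v form set set \<Rightarrow> 'v \<Rightarrow> 'v cstate set" where
  "can_V I p = {s \<in> can_S I. FVar p \<in> fst s}"

definition can_R :: "'v form set set \<Rightarrow> 'v cstate \<Rightarrow> 'v cstate \<Rightarrow> bool" where
  "can_R I s t \<longleftrightarrow> s \<in> can_S I \<and> t \<in> can_S I \<and>
     (\<forall>\<alpha>. inLT \<alpha> \<longrightarrow> FBel \<alpha> \<in> fst s \<longrightarrow> \<alpha> \<in> fst t)"

definition can_sat :: "'v form set set \<Rightarrow> 'v cstate \<Rightarrow> 'v form \<Rightarrow> bool" where
  "can_sat I s \<alpha> = sat I can_cell can_pref (can_R I) (can_V I) s \<alpha>"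

end

theory Submission
  imports Defs
begin


lemma classical_inLT: "classical a \<Longrightarrow> inLT a"
  by (induction a) auto

lemma inLT_conjs: "inLT (conjs xs) \<longleftrightarrow> (\<forall>x\<in>set xs. inLT x)"
  by (induction xs rule: conjs.induct) auto

lemma classical_conjs: "classical (conjs xs) \<longleftrightarrow> (\<forall>x\<in>set xs. classical x)"
  by (induction xs rule: conjs.induct) auto

lemma beval_conjs: "beval f (conjs xs) \<longleftrightarrow> (\<forall>x\<in>set xs. beval f x)"
  by (induction xs rule: conjs.induct) auto

lemma beval_foldr: "beval f (foldr FImp xs b) = ((\<forall>x\<in>set xs. beval f x) \<longrightarrow> beval f b)"
  by (induction xs) auto

lemma inLT_foldr: "inLT (foldr FImp xs b) \<longleftrightarrow> (\<forall>x\<in>set xs. inLT x) \<and> inLT b"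
  by (induction xs) auto

lemma classical_foldr: "classical (foldr FImp xs b) \<longleftrightarrow> (\<forall>x\<in>set xs. classical x) \<and> classical b"
  by (induction xs) auto

lemma literal_inLT: "is_literal l \<Longrightarrow> inLT l"
  unfolding is_literal_def by auto

lemma sbthm_inLT: "sbthm a \<Longrightarrow> inLT a"
proof (induction rule: sbthm.induct)
  case (Taut \<alpha>) then show ?case by (simp add: taut_def)
next
  case (RCK \<phi>s \<phi> \<psi>) then show ?case by (auto simp: inLT_conjs)
next
  case (S5F ls \<chi>) then show ?case by (auto simp: inLT_conjs literal_inLT classical_inLT)
qed (auto simp: classical_inLT)

lemma sbthm_foldr_MP: "sbthm (foldr FImp xs b) \<Longrightarrow> \<forall>x\<in>set xs. sbthm x \<Longrightarrow> sbthm b"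
  by (induction xs) (auto intro: sbthm.MP)

lemma taut_cons:
  assumes "\<forall>x\<in>set xs. sbthm x" "inLT b" "\<forall>f. (\<forall>x\<in>set xs. beval f x) \<longrightarrow> beval f b"
  shows "sbthm b"
proof -
  have "taut (foldr FImp xs b)"
    using assms by (auto simp: taut_def inLT_foldr beval_foldr sbthm_inLT)
  then show ?thesis using sbthm_foldr_MP assms(1) sbthm.Taut by blast
qed

lemma MCS_inLT: "MCS D \<Longrightarrow> a \<in> D \<Longrightarrow> inLT a"
  unfolding MCS_def by auto

lemma mcs_derive:
  assumes "MCS D" "set xs \<subseteq> D" "sbthm (foldr FImp xs b)" "inLT b"
  shows "b \<in> D"
proof (rule ccontr)
  assume "b \<notin> D"
  then have nb: "FNeg b \<in> D" using assms unfolding MCS_def by auto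
  have "sbthm (foldr FImp (xs @ [FNeg b]) FBot)"
    apply (rule taut_cons[of "[foldr FImp xs b]"])
    using assms MCS_inLT[OF assms(1)] by (auto simp: inLT_foldr beval_foldr)
  moreover have "set (xs @ [FNeg b]) \<subseteq> D" using assms nb by auto
  ultimately have "derives D FBot" unfolding derives_def by blast
  then show False using assms(1) unfolding MCS_def by auto
qed

lemma mcs_taut:
  assumes "MCS D" "set xs \<subseteq> D" "inLT b" "\<forall>f. (\<forall>x\<in>set xs. beval f x) \<longrightarrow> beval f b"
  shows "b \<in> D"
proof -
  have "sbthm (foldr FImp xs b)"
    apply (rule sbthm.Taut)
    using assms MCS_inLT[OF assms(1)] by (auto simp: taut_def inLT_foldr beval_foldr)
  then show ?thesis using mcs_derive assms by blast
qed

lemma mcs_thm: "MCS D \<Longrightarrow> sbthm b \<Longrightarrow> b \<in> D"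
  using mcs_derive[of D "[]" b] sbthm_inLT by auto

lemma mcs_bot: "MCS D \<Longrightarrow> FBot \<notin> D"
proof
  assume "MCS D" "FBot \<in> D"
  moreover have "sbthm (foldr FImp [FBot] FBot)" by (rule sbthm.Taut) (auto simp: taut_def)
  ultimately have "derives D FBot" unfolding derives_def
    by (metis empty_set empty_subsetI insert_subset list.simps(15))
  then show False using \<open>MCS D\<close> unfolding MCS_def by auto
qed

lemma mcs_neg: "MCS D \<Longrightarrow> inLT a \<Longrightarrow> FNeg a \<in> D \<longleftrightarrow> a \<notin> D"
proof
  assume "MCS D" "inLT a" "FNeg a \<in> D"
  show "a \<notin> D"
  proof
    assume "a \<in> D"
    then have "FBot \<in> D" using mcs_taut[of D "[a, FNeg a]" FBot] \<open>MCS D\<close> \<open>FNeg a \<in> D\<close> by auto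
    then show False using mcs_bot \<open>MCS D\<close> by auto
  qed
next
  assume "MCS D" "inLT a" "a \<notin> D"
  then show "FNeg a \<in> D" unfolding MCS_def by auto
qed

lemma mcs_and: assumes "MCS D" "inLT a" "inLT b" shows "FAnd a b \<in> D \<longleftrightarrow> a \<in> D \<and> b \<in> D"
proof
  assume h: "FAnd a b \<in> D"
  have "a \<in> D" by (rule mcs_taut[OF assms(1), of "[FAnd a b]"]) (use h assms in auto)
  moreover have "b \<in> D" by (rule mcs_taut[OF assms(1), of "[FAnd a b]"]) (use h assms in auto)
  ultimately show "a \<in> D \<and> b \<in> D" ..
next
  assume h: "a \<in> D \<and> b \<in> D"
  show "FAnd a b \<in> D" by (rule mcs_taut[OF assms(1), of "[a, b]"]) (use h assms in auto)
qed

lemma mcs_or: assumes "MCS D" "inLT a" "inLT b" shows "FOr a b \<in> D \<longleftrightarrow> a \<in> D \<or> b \<in> D"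
proof
  assume h: "FOr a b \<in> D"
  show "a \<in> D \<or> b \<in> D"
  proof (cases "a \<in> D")
    case True then show ?thesis ..
  next
    case False
    then have "FNeg a \<in> D" using mcs_neg assms by blast
    then have "b \<in> D" by (intro mcs_taut[OF assms(1), of "[FOr a b, FNeg a]"]) (use h assms in auto)
    then show ?thesis ..
  qed
next
  assume h: "a \<in> D \<or> b \<in> D"
  then show "FOr a b \<in> D"
  proof
    assume "a \<in> D" then show ?thesis by (intro mcs_taut[OF assms(1), of "[a]"]) (use assms in auto)
  next
    assume "b \<in> D" then show ?thesis by (intro mcs_taut[OF assms(1), of "[b]"]) (use assms in auto)
  qed
qed

lemma mcs_imp: assumes "MCS D" "inLT a" "inLT b" shows "FImp a b \<in> D \<longleftrightarrow> (a \<in> D \<longrightarrow> b \<in> D)"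
proof
  assume h: "FImp a b \<in> D"
  show "a \<in> D \<longrightarrow> b \<in> D"
  proof
    assume "a \<in> D"
    then show "b \<in> D" by (intro mcs_taut[OF assms(1), of "[FImp a b, a]"]) (use h assms in auto)
  qed
next
  assume h: "a \<in> D \<longrightarrow> b \<in> D"
  show "FImp a b \<in> D"
  proof (cases "a \<in> D")
    case True
    then have "b \<in> D" using h by blast
    then show ?thesis by (intro mcs_taut[OF assms(1), of "[b]"]) (use assms in auto)
  next
    case False
    then have "FNeg a \<in> D" using mcs_neg assms by blast
    then show ?thesis by (intro mcs_taut[OF assms(1), of "[FNeg a]"]) (use assms in auto)
  qed
qed

lemma mcs_iff: assumes "MCS D" "inLT a" "inLT b" shows "FIff a b \<in> D \<longleftrightarrow> (a \<in> D \<longleftrightarrow> b \<in> D)"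
proof
  assume h: "FIff a b \<in> D"
  show "a \<in> D \<longleftrightarrow> b \<in> D"
  proof
    assume "a \<in> D"
    then show "b \<in> D" by (intro mcs_taut[OF assms(1), of "[FIff a b, a]"]) (use h assms in auto)
  next
    assume "b \<in> D"
    then show "a \<in> D" by (intro mcs_taut[OF assms(1), of "[FIff a b, b]"]) (use h assms in auto)
  qed
next
  assume h: "a \<in> D \<longleftrightarrow> b \<in> D"
  show "FIff a b \<in> D"
  proof (cases "a \<in> D")
    case True
    then have "b \<in> D" using h by blast
    then show ?thesis by (intro mcs_taut[OF assms(1), of "[a, b]"]) (use True assms in auto)
  next
    case False
    then have "b \<notin> D" using h by blast
    then have "FNeg a \<in> D" "FNeg b \<in> D" using False mcs_neg assms by blast+
    then show ?thesis by (intro mcs_taut[OF assms(1), of "[FNeg a, FNeg b]"]) (use assms in auto)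
  qed
qed

lemma derives_insert:
  assumes "derives (insert a M) FBot" "inLT a" "M \<subseteq> {x. inLT x}"
  shows "\<exists>ys. set ys \<subseteq> M \<and> sbthm (foldr FImp ys (FNeg a))"
proof -
  obtain xs where xs: "set xs \<subseteq> insert a M" "sbthm (foldr FImp xs FBot)"
    using assms(1) unfolding derives_def by auto
  let ?ys = "filter (\<lambda>x. x \<noteq> a) xs"
  have "sbthm (foldr FImp ?ys (FNeg a))"
    apply (rule taut_cons[of "[foldr FImp xs FBot]"])
    using xs assms by (auto simp: inLT_foldr beval_foldr)
  moreover have "set ?ys \<subseteq> M" using xs by auto
  ultimately show ?thesis by blast
qed

lemma lindenbaum:
  fixes X :: "'v form set"
  assumes "X \<subseteq> {a. inLT a}" "\<not> derives X FBot"
  shows "\<exists>M. MCS M \<and> X \<subseteq> M"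
proof -
  let ?A = "{Y. X \<subseteq> Y \<and> Y \<subseteq> {a. inLT a} \<and> \<not> derives Y FBot}"
  have "\<exists>M\<in>?A. \<forall>Y\<in>?A. M \<subseteq> Y \<longrightarrow> Y = M"
  proof (rule subset_Zorn_nonempty)
    show "?A \<noteq> {}" using assms by auto
  next
    fix C assume C: "C \<noteq> {}" "subset.chain ?A C"
    have sub: "C \<subseteq> ?A" using C(2) unfolding subset.chain_def by auto
    have "\<not> derives (\<Union>C) FBot"
    proof
      assume "derives (\<Union>C) FBot"
      then obtain xs where xs: "set xs \<subseteq> \<Union>C" "sbthm (foldr FImp xs FBot)"
        unfolding derives_def by auto
      obtain B where "B \<in> C" "set xs \<subseteq> B"
        using finite_subset_Union_chain[OF _ xs(1) C(1) C(2)] by auto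
      then have "derives B FBot" using xs unfolding derives_def by auto
      then show False using sub \<open>B \<in> C\<close> by auto
    qed
    then show "\<Union>C \<in> ?A" using C sub by auto
  qed
  then obtain M where M: "M \<in> ?A" "\<forall>Y\<in>?A. M \<subseteq> Y \<longrightarrow> Y = M" by blast
  have "MCS M"
    unfolding MCS_def
  proof (intro conjI allI impI)
    show "M \<subseteq> {a. inLT a}" "\<not> derives M FBot" using M by auto
  next
    fix a :: "'v form" assume a: "inLT a"
    show "a \<in> M \<or> FNeg a \<in> M"
    proof (rule ccontr)
      assume n: "\<not> (a \<in> M \<or> FNeg a \<in> M)"
      have d1: "derives (insert a M) FBot"
      proof (rule ccontr)
        assume "\<not> derives (insert a M) FBot"
        then have "insert a M \<in> ?A" using M a by auto
        then have "insert a M = M" using M(2) by blast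
        then show False using n by auto
      qed
      have d2: "derives (insert (FNeg a) M) FBot"
      proof (rule ccontr)
        assume "\<not> derives (insert (FNeg a) M) FBot"
        then have "insert (FNeg a) M \<in> ?A" using M a by auto
        then have "insert (FNeg a) M = M" using M(2) by blast
        then show False using n by auto
      qed
      obtain ys where ys: "set ys \<subseteq> M" "sbthm (foldr FImp ys (FNeg a))"
        using derives_insert[OF d1 a] M by auto
      obtain zs where zs: "set zs \<subseteq> M" "sbthm (foldr FImp zs (FNeg (FNeg a)))"
        using derives_insert[OF d2] a M by auto
      have "sbthm (foldr FImp (ys @ zs) FBot)"
        apply (rule taut_cons[of "[foldr FImp ys (FNeg a), foldr FImp zs (FNeg (FNeg a))]"])
        using ys zs M by (auto simp: inLT_foldr beval_foldr)
      then have "derives M FBot" using ys zs unfolding derives_def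
        by (metis le_sup_iff set_append)
      then show False using M by auto
    qed
  qed
  then show ?thesis using M by auto
qed



abbreviation box :: "'v form \<Rightarrow> 'v form" where
  "box t \<equiv> FCond (FNeg t) FBot"

definition lits :: "'v form set \<Rightarrow> 'v form set" where
  "lits G = {l \<in> G. is_literal l}"

lemma mcs_cond_classical: "MCS D \<Longrightarrow> FCond a b \<in> D \<Longrightarrow> classical a \<and> classical b"
  using MCS_inLT by fastforce

lemma lits_class:
  assumes "MCS G" "MCS Om" "lits G \<subseteq> Om"
  shows "same_conds Om G"
  unfolding same_conds_def
proof (intro allI iffI)
  fix a b assume h: "FCond a b \<in> Om"
  then have c: "classical a" "classical b" using mcs_cond_classical assms by blast+
  show "FCond a b \<in> G"
  proof (rule ccontr)
    assume "FCond a b \<notin> G"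
    then have "FNeg (FCond a b) \<in> G" using mcs_neg[OF assms(1)] c by auto
    then have "FNeg (FCond a b) \<in> Om" using assms(3) c unfolding lits_def is_literal_def by blast
    then show False using mcs_neg[OF assms(2)] h c by auto
  qed
next
  fix a b assume h: "FCond a b \<in> G"
  then have c: "classical a" "classical b" using mcs_cond_classical assms by blast+
  then show "FCond a b \<in> Om" using assms(3) h unfolding lits_def is_literal_def by blast
qed

lemma lits_inLT: "MCS G \<Longrightarrow> lits G \<subseteq> {x. inLT x}"
  unfolding lits_def using MCS_inLT by blast

lemma G_lemma:
  fixes G X :: "'v form set"
  assumes "MCS G" "X \<subseteq> {x. classical x}" "derives (lits G \<union> X) FBot"
  shows "\<exists>cs. set cs \<subseteq> X \<and> box (foldr FImp cs FBot) \<in> G"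
proof -
  obtain xs where xs: "set xs \<subseteq> lits G \<union> X" "sbthm (foldr FImp xs FBot)"
    using assms(3) unfolding derives_def by auto
  define cs where "cs = filter (\<lambda>x. x \<in> X) xs"
  define ls where "ls = filter (\<lambda>x. x \<notin> X) xs"
  define l0 :: "'v form" where "l0 = FCond FBot FBot"
  define chi where "chi = foldr FImp cs FBot"
  have csX: "set cs \<subseteq> X" unfolding cs_def by auto
  have lsG: "set ls \<subseteq> lits G" unfolding ls_def using xs by auto
  have cchi: "classical chi" unfolding chi_def using csX assms(2) by (auto simp: classical_foldr)
  have l0G: "l0 \<in> G" unfolding l0_def using mcs_thm[OF assms(1)] sbthm.Id by force
  have l0l: "is_literal l0" unfolding l0_def is_literal_def by auto
  have lsl: "\<forall>l\<in>set (l0 # ls). is_literal l" using lsG l0l unfolding lits_def by auto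
  have inl: "\<forall>l\<in>set (l0 # ls). inLT l" using lsl literal_inLT by blast
  have "sbthm (FImp (conjs (l0 # ls)) chi)"
    apply (rule taut_cons[of "[foldr FImp xs FBot]"])
    using xs inl cchi classical_inLT
    by (auto simp: inLT_conjs beval_conjs beval_foldr chi_def cs_def ls_def)
  then have "sbthm (FImp (conjs (l0 # ls)) (FCond (FNeg chi) FBot))"
    using sbthm.S5F[of "l0 # ls" chi] lsl cchi by auto
  moreover have "conjs (l0 # ls) \<in> G"
    apply (rule mcs_taut[OF assms(1), of "l0 # ls"])
    using l0G lsG inl unfolding lits_def by (auto simp: inLT_conjs beval_conjs)
  ultimately have "box chi \<in> G"
    using mcs_derive[OF assms(1), of "[conjs (l0 # ls)]"] cchi classical_inLT by auto
  then show ?thesis using csX chi_def by blast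
qed

lemma box_mono:
  assumes "MCS G" "classical c" "classical t" "\<forall>f. beval f c \<longrightarrow> beval f t" "box c \<in> G"
  shows "box t \<in> G"
proof -
  have "sbthm (FImp (box c) (FNeg (FNeg c)))" using sbthm.Bot[of "FNeg c"] assms by auto
  then have "sbthm (FImp (conjs [box c]) t)"
    apply -
    apply (rule taut_cons[of "[FImp (box c) (FNeg (FNeg c))]"])
    using assms classical_inLT by auto
  then have "sbthm (FImp (conjs [box c]) (box t))"
    using sbthm.S5F[of "[box c]" t] assms unfolding is_literal_def by auto
  then show ?thesis using mcs_derive[OF assms(1), of "[box c]"] assms classical_inLT by auto
qed

lemma box_T:
  assumes "MCS G" "classical t" "box t \<in> G"
  shows "t \<in> G"
proof -
  have "sbthm (FImp (box t) (FNeg (FNeg t)))" using sbthm.Bot[of "FNeg t"] assms by auto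
  moreover have "inLT t" using classical_inLT assms by blast
  ultimately have "FNeg (FNeg t) \<in> G" using mcs_derive[OF assms(1), of "[box t]" "FNeg (FNeg t)"] assms by auto
  then show ?thesis using mcs_taut[OF assms(1), of "[FNeg (FNeg t)]" t] assms classical_inLT by auto
qed

lemma box_N:
  assumes "MCS G" "classical t" "\<forall>Om. MCS Om \<and> same_conds Om G \<longrightarrow> t \<in> Om"
  shows "box t \<in> G"
proof (cases "derives (lits G \<union> {FNeg t}) FBot")
  case True
  then obtain cs where cs: "set cs \<subseteq> {FNeg t}" "box (foldr FImp cs FBot) \<in> G"
    using G_lemma[OF assms(1), of "{FNeg t}"] assms(2) by auto
  show ?thesis
    apply (rule box_mono[OF assms(1) _ assms(2) _ cs(2)])
    using cs(1) assms(2) by (auto simp: classical_foldr beval_foldr)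
next
  case False
  then obtain Om where Om: "MCS Om" "lits G \<union> {FNeg t} \<subseteq> Om"
    using lindenbaum[of "lits G \<union> {FNeg t}"] lits_inLT[OF assms(1)] assms(2) classical_inLT by auto
  then have "same_conds Om G" using lits_class assms(1) by blast
  then have "t \<in> Om" using assms Om by auto
  then show ?thesis using Om mcs_neg[OF Om(1)] assms(2) classical_inLT by auto
qed

lemma RCK_mcs:
  assumes "MCS G" "as \<noteq> []" "\<forall>a\<in>set as. classical a \<and> FCond p a \<in> G" "classical p" "classical b"
    "\<forall>f. (\<forall>a\<in>set as. beval f a) \<longrightarrow> beval f b"
  shows "FCond p b \<in> G"
proof -
  have "sbthm (FImp (conjs as) b)"
    apply (rule sbthm.Taut)
    using assms classical_inLT by (auto simp: taut_def inLT_conjs beval_conjs)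
  then have "sbthm (FImp (conjs (map (FCond p) as)) (FCond p b))"
    using sbthm.RCK[of as b p] assms by auto
  moreover have "conjs (map (FCond p) as) \<in> G"
    apply (rule mcs_taut[OF assms(1), of "map (FCond p) as"])
    using assms by (auto simp: inLT_conjs beval_conjs)
  ultimately show ?thesis
    using mcs_derive[OF assms(1), of "[conjs (map (FCond p) as)]"] assms by auto
qed

lemma box_cond:
  assumes "MCS G" "classical p" "classical t" "box t \<in> G"
  shows "FCond p t \<in> G"
proof -
  have b: "box (FIff p (FAnd p t)) \<in> G"
    apply (rule box_mono[OF assms(1) assms(3) _ _ assms(4)]) using assms by auto
  have "sbthm (FImp (box (FIff p (FAnd p t))) (FIff (FCond p t) (FCond (FAnd p t) t)))"
    using sbthm.Ext[of p "FAnd p t" t] assms by auto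
  then have e: "FIff (FCond p t) (FCond (FAnd p t) t) \<in> G"
    using mcs_derive[OF assms(1), of "[box (FIff p (FAnd p t))]"] b assms by auto
  have i: "FCond (FAnd p t) (FAnd p t) \<in> G" using mcs_thm[OF assms(1)] sbthm.Id[of "FAnd p t"] assms by simp
  have "FCond (FAnd p t) t \<in> G"
    apply (rule RCK_mcs[OF assms(1), of "[FAnd p t]"]) using i assms by auto
  then show ?thesis using e mcs_iff[OF assms(1)] assms by auto
qed

lemma exist_likely:
  assumes "MCS G" "classical p" "classical q" "FCond p q \<notin> G"
  shows "\<exists>Om. MCS Om \<and> same_conds Om G \<and> likely_set p G \<subseteq> Om \<and> FNeg q \<in> Om"
proof -
  let ?X = "likely_set p G \<union> {FNeg q}"
  have Xc: "?X \<subseteq> {x. classical x}" using assms mcs_cond_classical[OF assms(1)]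
    unfolding likely_set_def by auto
  show ?thesis
  proof (cases "derives (lits G \<union> ?X) FBot")
    case True
    then obtain cs where cs: "set cs \<subseteq> ?X" "box (foldr FImp cs FBot) \<in> G"
      using G_lemma[OF assms(1) Xc] by auto
    define chi where "chi = foldr FImp cs FBot"
    have cchi: "classical chi" using cs Xc unfolding chi_def by (auto simp: classical_foldr)
    have pc: "FCond p chi \<in> G" using box_cond[OF assms(1) assms(2) cchi] cs chi_def by auto
    define ds where "ds = filter (\<lambda>x. x \<noteq> FNeg q) cs"
    have "FCond p q \<in> G"
      apply (rule RCK_mcs[OF assms(1), of "chi # ds"])
      using pc cchi cs Xc assms unfolding ds_def likely_set_def
      by (auto simp: chi_def beval_foldr)
    then show ?thesis using assms by auto
  next
    case False
    then obtain Om where Om: "MCS Om" "lits G \<union> ?X \<subseteq> Om"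
      using lindenbaum[of "lits G \<union> ?X"] lits_inLT[OF assms(1)] Xc classical_inLT by blast
    then show ?thesis using lits_class[OF assms(1) Om(1)] by auto
  qed
qed



lemma cell_S: "G \<in> I \<Longrightarrow> can_cell G \<subseteq> can_S I"
  unfolding can_S_def by auto

lemma S_MCS: "s \<in> can_S I \<Longrightarrow> MCS (fst s)"
  unfolding can_S_def can_cell_def by auto

lemma the_cell:
  assumes "representatives I" "s \<in> can_S I"
  shows "(THE G. G \<in> I \<and> s \<in> can_cell G) \<in> I \<and> s \<in> can_cell (THE G. G \<in> I \<and> s \<in> can_cell G)"
proof (rule theI')
  obtain G where G: "G \<in> I" "s \<in> can_cell G" using assms(2) unfolding can_S_def by auto
  show "\<exists>!G. G \<in> I \<and> s \<in> can_cell G"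
  proof (rule ex1I[of _ G])
    show "G \<in> I \<and> s \<in> can_cell G" using G by auto
  next
    fix H assume H: "H \<in> I \<and> s \<in> can_cell H"
    have m: "MCS (fst s)" using S_MCS assms by blast
    have "same_conds (fst s) G" "same_conds (fst s) H" using G H unfolding can_cell_def by auto
    then show "H = G" using assms(1) m G H unfolding representatives_def by blast
  qed
qed

lemma cond_main:
  fixes G :: "'v form set"
  assumes G: "MCS G" and cp: "classical p" and cq: "classical q"
  shows "most (can_pref G) {v \<in> can_cell G. p \<in> fst v} \<subseteq> {v \<in> can_cell G. q \<in> fst v}
         \<longleftrightarrow> FCond p q \<in> G"
proof
  assume "most (can_pref G) {v \<in> can_cell G. p \<in> fst v} \<subseteq> {v \<in> can_cell G. q \<in> fst v}"
  then have sub: "most (can_pref G) {v \<in> can_cell G. p \<in> fst v} \<subseteq> {v \<in> can_cell G. q \<in> fst v}" .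
  show "FCond p q \<in> G"
  proof (rule ccontr)
    assume "FCond p q \<notin> G"
    then obtain Om where Om: "MCS Om" "same_conds Om G" "likely_set p G \<subseteq> Om" "FNeg q \<in> Om"
      using exist_likely[OF G cp cq] by blast
    have "FCond p p \<in> G" using mcs_thm[OF G] sbthm.Id[OF cp] by simp
    then have pOm: "p \<in> Om" using Om(3) unfolding likely_set_def by auto
    have xc: "(Om, p, 0) \<in> can_cell G" using Om cp unfolding can_cell_def by auto
    have "(Om, p, 0) \<in> most (can_pref G) {v \<in> can_cell G. p \<in> fst v}"
      unfolding most_def using xc pOm Om(3) by (auto simp: can_pref_def)
    then have "q \<in> Om" using sub by auto
    then show False using Om(4) mcs_neg[OF Om(1)] cq classical_inLT by blast
  qed
next
  assume pq: "FCond p q \<in> G"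
  show "most (can_pref G) {v \<in> can_cell G. p \<in> fst v} \<subseteq> {v \<in> can_cell G. q \<in> fst v}"
  proof
    fix x assume xm: "x \<in> most (can_pref G) {v \<in> can_cell G. p \<in> fst v}"
    obtain D c i where x: "x = (D, c, i)" by (cases x) auto
    have xc: "MCS D" "same_conds D G" "classical c" "i \<in> {0,1,2}" "p \<in> D"
      using xm x unfolding most_def can_cell_def by auto
    have claim: "likely_set c G \<subseteq> D \<and> c \<in> Om" if Om: "MCS Om" "same_conds Om G" "p \<in> Om" for Om
    proof -
      define j :: nat where "j = (if i = 0 then 1 else if i = 1 then 2 else 0)"
      have yc: "(Om, p, j) \<in> {v \<in> can_cell G. p \<in> fst v}"
        using Om cp unfolding can_cell_def j_def by auto
      have "can_pref G (Om, p, j) x" using xc x unfolding can_pref_def j_def by auto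
      then have "can_pref G x (Om, p, j)" using xm yc unfolding most_def by blast
      then show ?thesis using xc x unfolding can_pref_def j_def by (auto split: if_splits)
    qed
    have lik: "likely_set c G \<subseteq> D" using claim xc by blast
    have ip: "inLT p" "inLT c" "inLT q" using cp xc cq classical_inLT by auto
    have "\<forall>Om. MCS Om \<and> same_conds Om G \<longrightarrow> FIff p (FAnd c p) \<in> Om"
    proof (intro allI impI)
      fix Om assume Om: "MCS Om \<and> same_conds Om G"
      show "FIff p (FAnd c p) \<in> Om"
        using claim[of Om] Om mcs_iff[of Om p "FAnd c p"] mcs_and[of Om c p] ip by auto
    qed
    then have bx: "box (FIff p (FAnd c p)) \<in> G" using box_N[OF G] cp xc by simp
    have "sbthm (FImp (box (FIff p (FAnd c p))) (FIff (FCond p q) (FCond (FAnd c p) q)))"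
      using sbthm.Ext[of p "FAnd c p" q] cp cq xc by simp
    then have "FIff (FCond p q) (FCond (FAnd c p) q) \<in> G"
      using mcs_derive[OF G, of "[box (FIff p (FAnd c p))]"] bx cp cq xc classical_inLT by simp
    then have "FCond (FAnd c p) q \<in> G" using mcs_iff[OF G] pq cp cq xc by simp
    moreover have "sbthm (FImp (FCond (FAnd c p) q) (FCond c (FImp p q)))"
      using sbthm.Sh[of q c p] cp cq xc by simp
    ultimately have "FCond c (FImp p q) \<in> G"
      using mcs_derive[OF G, of "[FCond (FAnd c p) q]"] cp cq xc by simp
    then have "FImp p q \<in> D" using lik unfolding likely_set_def by auto
    then have "q \<in> D" using mcs_imp[OF xc(1)] ip xc by simp
    then show "x \<in> {v \<in> can_cell G. q \<in> fst v}" using xm x unfolding most_def by auto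
  qed
qed

lemma K_list:
  "sbthm (foldr FImp ys a) \<Longrightarrow> \<forall>y\<in>set ys. inLT y \<Longrightarrow> inLT a \<Longrightarrow>
   sbthm (foldr FImp (map FBel ys) (FBel a))"
proof (induction ys arbitrary: a)
  case Nil then show ?case by (simp add: sbthm.Nec)
next
  case (Cons y ys)
  have "sbthm (foldr FImp ys (FImp y a))"
    apply (rule taut_cons[of "[foldr FImp (y # ys) a]"])
    using Cons.prems by (auto simp: inLT_foldr beval_foldr)
  then have h: "sbthm (foldr FImp (map FBel ys) (FBel (FImp y a)))"
    using Cons by simp
  have k: "sbthm (FImp (FBel (FImp y a)) (FImp (FBel y) (FBel a)))"
    using sbthm.K[of y a] Cons.prems by simp
  show ?case
    apply (rule taut_cons[of "[foldr FImp (map FBel ys) (FBel (FImp y a)), FImp (FBel (FImp y a)) (FImp (FBel y) (FBel a))]"])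
    using h k Cons.prems by (auto simp: inLT_foldr beval_foldr)
qed

lemma truth:
  fixes I :: "'v form set set"
  assumes rep: "representatives I"
  shows "inLT a \<Longrightarrow> \<forall>s\<in>can_S I. (sat I can_cell can_pref (can_R I) (can_V I) s a \<longleftrightarrow> a \<in> fst s)"
proof (induction a)
  case (FVar x) then show ?case by (auto simp: can_V_def)
next
  case FBot
  show ?case
  proof
    fix s assume "s \<in> can_S I"
    then have "MCS (fst s)" by (rule S_MCS)
    then show "sat I can_cell can_pref (can_R I) (can_V I) s FBot \<longleftrightarrow> FBot \<in> fst s"
      using mcs_bot by simp
  qed
next
  case (FNeg a)
  show ?case
  proof
    fix s assume s: "s \<in> can_S I"
    then have M: "MCS (fst s)" by (rule S_MCS)
    show "sat I can_cell can_pref (can_R I) (can_V I) s (FNeg a) \<longleftrightarrow> FNeg a \<in> fst s"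
      using FNeg.IH FNeg.prems s mcs_neg[OF M] by simp
  qed
next
  case (FAnd a b)
  show ?case
  proof
    fix s assume s: "s \<in> can_S I"
    then have M: "MCS (fst s)" by (rule S_MCS)
    show "sat I can_cell can_pref (can_R I) (can_V I) s (FAnd a b) \<longleftrightarrow> FAnd a b \<in> fst s"
      using FAnd.IH FAnd.prems s mcs_and[OF M] by simp
  qed
next
  case (FOr a b)
  show ?case
  proof
    fix s assume s: "s \<in> can_S I"
    then have M: "MCS (fst s)" by (rule S_MCS)
    show "sat I can_cell can_pref (can_R I) (can_V I) s (FOr a b) \<longleftrightarrow> FOr a b \<in> fst s"
      using FOr.IH FOr.prems s mcs_or[OF M] by simp
  qed
next
  case (FImp a b)
  show ?case
  proof
    fix s assume s: "s \<in> can_S I"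
    then have M: "MCS (fst s)" by (rule S_MCS)
    show "sat I can_cell can_pref (can_R I) (can_V I) s (FImp a b) \<longleftrightarrow> FImp a b \<in> fst s"
      using FImp.IH FImp.prems s mcs_imp[OF M] by simp
  qed
next
  case (FIff a b)
  show ?case
  proof
    fix s assume s: "s \<in> can_S I"
    then have M: "MCS (fst s)" by (rule S_MCS)
    show "sat I can_cell can_pref (can_R I) (can_V I) s (FIff a b) \<longleftrightarrow> FIff a b \<in> fst s"
      using FIff.IH FIff.prems s mcs_iff[OF M] by simp
  qed
next
  case (FCond a b)
  have ca: "classical a" "classical b" using FCond.prems by auto
  have IHa: "\<forall>s\<in>can_S I. (sat I can_cell can_pref (can_R I) (can_V I) s a \<longleftrightarrow> a \<in> fst s)"
    using FCond.IH(1) ca classical_inLT by blast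
  have IHb: "\<forall>s\<in>can_S I. (sat I can_cell can_pref (can_R I) (can_V I) s b \<longleftrightarrow> b \<in> fst s)"
    using FCond.IH(2) ca classical_inLT by blast
  show ?case
  proof
    fix s assume s: "s \<in> can_S I"
    define G where "G = (THE G. G \<in> I \<and> s \<in> can_cell G)"
    have GI: "G \<in> I" "s \<in> can_cell G" using the_cell[OF rep s] unfolding G_def by auto
    have MG: "MCS G" using GI rep unfolding representatives_def by auto
    have sc: "same_conds (fst s) G" using GI unfolding can_cell_def by auto
    have e1: "{v \<in> can_cell G. sat I can_cell can_pref (can_R I) (can_V I) v a} = {v \<in> can_cell G. a \<in> fst v}"
      using IHa cell_S[OF GI(1)] by blast
    have e2: "{v \<in> can_cell G. sat I can_cell can_pref (can_R I) (can_V I) v b} = {v \<in> can_cell G. b \<in> fst v}"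
      using IHb cell_S[OF GI(1)] by blast
    have "sat I can_cell can_pref (can_R I) (can_V I) s (FCond a b) \<longleftrightarrow>
          most (can_pref G) {v \<in> can_cell G. a \<in> fst v} \<subseteq> {v \<in> can_cell G. b \<in> fst v}"
      by (simp only: sat.simps Let_def G_def[symmetric] e1 e2)
    also have "\<dots> \<longleftrightarrow> FCond a b \<in> G" using cond_main[OF MG ca] .
    also have "\<dots> \<longleftrightarrow> FCond a b \<in> fst s" using sc unfolding same_conds_def by auto
    finally show "sat I can_cell can_pref (can_R I) (can_V I) s (FCond a b) \<longleftrightarrow> FCond a b \<in> fst s" .
  qed
next
  case (FBel a)
  have ia: "inLT a" using FBel.prems by simp
  have IH: "\<forall>s\<in>can_S I. (sat I can_cell can_pref (can_R I) (can_V I) s a \<longleftrightarrow> a \<in> fst s)"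
    using FBel.IH ia by blast
  show ?case
  proof
    fix s assume s: "s \<in> can_S I"
    have MD: "MCS (fst s)" using S_MCS s by blast
    show "sat I can_cell can_pref (can_R I) (can_V I) s (FBel a) \<longleftrightarrow> FBel a \<in> fst s"
    proof
      assume "FBel a \<in> fst s"
      then show "sat I can_cell can_pref (can_R I) (can_V I) s (FBel a)"
        using IH ia unfolding can_R_def by auto
    next
      assume sat: "sat I can_cell can_pref (can_R I) (can_V I) s (FBel a)"
      show "FBel a \<in> fst s"
      proof (rule ccontr)
        assume nb: "FBel a \<notin> fst s"
        let ?X = "{b. FBel b \<in> fst s}"
        have Xi: "?X \<subseteq> {x. inLT x}" using MCS_inLT[OF MD] by fastforce
        have "\<not> derives (insert (FNeg a) ?X) FBot"
        proof
          assume "derives (insert (FNeg a) ?X) FBot"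
          then obtain ys where ys: "set ys \<subseteq> ?X" "sbthm (foldr FImp ys (FNeg (FNeg a)))"
            using derives_insert[of "FNeg a" ?X] ia Xi by auto
          have yi: "\<forall>y\<in>set ys. inLT y" using ys Xi by auto
          have "sbthm (foldr FImp ys a)"
            apply (rule taut_cons[of "[foldr FImp ys (FNeg (FNeg a))]"])
            using ys yi ia by (auto simp: inLT_foldr beval_foldr)
          then have "sbthm (foldr FImp (map FBel ys) (FBel a))" using K_list yi ia by blast
          moreover have "set (map FBel ys) \<subseteq> fst s" using ys by auto
          ultimately have "FBel a \<in> fst s" using mcs_derive[OF MD, of "map FBel ys" "FBel a"] ia by simp
          then show False using nb by simp
        qed
        then obtain Om where Om: "MCS Om" "insert (FNeg a) ?X \<subseteq> Om"
          using lindenbaum[of "insert (FNeg a) ?X"] Xi ia by auto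
        obtain G where G: "G \<in> I" "same_conds Om G" using rep Om(1) unfolding representatives_def by blast
        have tS: "(Om, FBot, 0) \<in> can_S I" using G Om(1) unfolding can_S_def can_cell_def by auto
        have "can_R I s (Om, FBot, 0)" using s tS Om(2) unfolding can_R_def by auto
        then have "sat I can_cell can_pref (can_R I) (can_V I) (Om, FBot, 0) a" using sat by simp
        then have "a \<in> Om" using IH tS by auto
        then show False using Om mcs_neg[OF Om(1) ia] by auto
      qed
    qed
  qed
qed


theorem lemma3:
  fixes I :: "'v form set set" and \<Delta> :: "'v form set" and \<pi> :: "'v form" and i :: nat
    and \<alpha> :: "'v form"
  assumes "representatives I"
    and "(\<Delta>, \<pi>, i) \<in> can_S I"
    and "inLT \<alpha>"
  shows "can_sat I (\<Delta>, \<pi>, i) \<alpha> \<longleftrightarrow> \<alpha> \<in> \<Delta>"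
  using truth[OF assms(1) assms(3)] assms(2) unfolding can_sat_def by auto

end
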